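(* Let $\Delta$ be a simplicial complex on vertex set $[n]$ with $f$-vector $(f_{-1},f_0,\dots,f_{n-1})$ (with $f_{i-1}$ the number of faces of cardinality $i$). Then \[ H(\mathbb{k}[\Delta],t)=\sum_{\ell=0}^n\alpha_\ell\, H(\mathbb{k}[\Delta_\ell],t),\qquad \alpha_\ell=\frac{f_{\ell-1}}{\binom n\ell}-\frac{f_\ell}{\binom n{\ell+1}}, \] with the convention $f_n/\binom n{n+1}=0$.
   Context: $S=\mathbb{k}[x_1,\dots,x_n]$; for a simplicial complex $\Delta$ on $[n]$, $\mathbb{k}[\Delta]=S/I_\Delta$ is its Stanley–Reisner ring and $H(\cdot,t)$ denotes the coarse ($\mathbb{N}$-graded) Hilbert series. For $0\le\ell\le n$, $\Delta_\ell=\{\sigma\subseteq[n]:|\sigma|\le\ell\}$ is the $(\ell-1)$-skeleton of the full simplex on $[n]$. *)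

theory Defs
  imports "HOL-Computational_Algebra.Formal_Power_Series"
begin

definition simplicial_complex :: "nat \<Rightarrow> nat set set \<Rightarrow> bool" where
  "simplicial_complex n \<Delta> \<longleftrightarrow>
     (\<forall>\<sigma>\<in>\<Delta>. \<sigma> \<subseteq> {1..n}) \<and> (\<forall>\<sigma>\<in>\<Delta>. \<forall>\<tau>. \<tau> \<subseteq> \<sigma> \<longrightarrow> \<tau> \<in> \<Delta>)"

text \<open>Number of faces of cardinality k, i.e. f_(k-1).\<close>
definition faces_card :: "nat set set \<Rightarrow> nat \<Rightarrow> nat" where
  "faces_card \<Delta> k = card {\<sigma>\<in>\<Delta>. card \<sigma> = k}"

text \<open>(l-1)-skeleton of the full simplex on [n].\<close>
definition skel :: "nat \<Rightarrow> nat \<Rightarrow> nat set set" where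
  "skel n l = {\<sigma>. \<sigma> \<subseteq> {1..n} \<and> card \<sigma> \<le> l}"

text \<open>Monomials of S = k[x_1..x_n] of degree d, as exponent vectors a with support in [n].\<close>
definition monomials_deg :: "nat \<Rightarrow> nat \<Rightarrow> (nat \<Rightarrow> nat) set" where
  "monomials_deg n d = {a. (\<forall>i. i \<notin> {1..n} \<longrightarrow> a i = 0) \<and> (\<Sum>i\<in>{1..n}. a i) = d}"

text \<open>A monomial x^a lies in the Stanley--Reisner ideal I_Delta (generated by the squarefree
  monomials x_tau, tau a non-face) iff it is divisible by some such generator.\<close>
definition in_SR_ideal :: "nat \<Rightarrow> nat set set \<Rightarrow> (nat \<Rightarrow> nat) \<Rightarrow> bool" where
  "in_SR_ideal n \<Delta> a \<longleftrightarrow> (\<exists>\<tau>. \<tau> \<subseteq> {1..n} \<and> \<tau> \<notin> \<Delta> \<and> (\<forall>i\<in>\<tau>. 1 \<le> a i))"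

text \<open>Hilbert function of k[Delta] = S/I_Delta: dim_k of the degree-d part, which (I_Delta being
  a monomial ideal) equals the number of degree-d monomials not in I_Delta.\<close>
definition SR_hilbert_fun :: "nat \<Rightarrow> nat set set \<Rightarrow> nat \<Rightarrow> nat" where
  "SR_hilbert_fun n \<Delta> d = card {a \<in> monomials_deg n d. \<not> in_SR_ideal n \<Delta> a}"

definition SR_hilbert_series :: "nat \<Rightarrow> nat set set \<Rightarrow> rat fps" where
  "SR_hilbert_series n \<Delta> = Abs_fps (\<lambda>d. of_nat (SR_hilbert_fun n \<Delta> d))"

end

theory Submission
  imports Defs
begin

definition gcnt :: "nat \<Rightarrow> nat \<Rightarrow> nat set \<Rightarrow> nat" where
  "gcnt n d \<sigma> = card {a \<in> monomials_deg n d. {i. a i \<noteq> 0} = \<sigma>}"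

lemma finite_mon: "finite (monomials_deg n d)"
proof -
  have "monomials_deg n d \<subseteq> {f. \<forall>x. (x \<in> {1..n} \<longrightarrow> f x \<in> {0..d}) \<and> (x \<notin> {1..n} \<longrightarrow> f x = 0)}"
  proof
    fix a assume a: "a \<in> monomials_deg n d"
    have "\<forall>x\<in>{1..n}. a x \<le> d"
    proof
      fix x assume "x \<in> {1..n}"
      then have "a x \<le> (\<Sum>i\<in>{1..n}. a i)"
        by (intro member_le_sum) auto
      then show "a x \<le> d" using a by (simp add: monomials_deg_def)
    qed
    then show "a \<in> {f. \<forall>x. (x \<in> {1..n} \<longrightarrow> f x \<in> {0..d}) \<and> (x \<notin> {1..n} \<longrightarrow> f x = 0)}"
      using a by (auto simp: monomials_deg_def)
  qed
  then show ?thesis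
    by (rule finite_subset) (rule finite_set_of_finite_funs, auto)
qed

lemma gcnt_le:
  assumes k: "bij_betw k \<tau> \<sigma>" and st: "\<sigma> \<subseteq> {1..n}" "\<tau> \<subseteq> {1..n}"
  shows "gcnt n d \<sigma> \<le> gcnt n d \<tau>"
proof -
  define F where "F = (\<lambda>a::nat\<Rightarrow>nat. \<lambda>i. if i \<in> \<tau> then a (k i) else 0)"
  let ?A = "{a \<in> monomials_deg n d. {i. a i \<noteq> 0} = \<sigma>}"
  let ?B = "{a \<in> monomials_deg n d. {i. a i \<noteq> 0} = \<tau>}"
  have inj: "inj_on F ?A"
  proof (rule inj_onI)
    fix a b assume a: "a \<in> ?A" and b: "b \<in> ?A" and e: "F a = F b"
    show "a = b"
    proof
      fix j
      show "a j = b j"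
      proof (cases "j \<in> \<sigma>")
        case True
        then obtain i where i: "i \<in> \<tau>" "j = k i" using k by (metis bij_betw_iff_bijections)
        have "F a i = F b i" using e by simp
        then show ?thesis using i by (simp add: F_def)
      next
        case False
        then show ?thesis using a b by auto
      qed
    qed
  qed
  have img: "F ` ?A \<subseteq> ?B"
  proof
    fix b assume "b \<in> F ` ?A"
    then obtain a where a: "a \<in> ?A" and b: "b = F a" by auto
    have z: "\<forall>i. i \<notin> {1..n} \<longrightarrow> b i = 0" using st b by (auto simp: F_def)
    have "(\<Sum>i\<in>{1..n}. b i) = (\<Sum>i\<in>\<tau>. b i)"
      using st z by (intro sum.mono_neutral_right) (auto simp: b F_def)
    also have "\<dots> = (\<Sum>i\<in>\<tau>. a (k i))" by (simp add: b F_def)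
    also have "\<dots> = (\<Sum>j\<in>\<sigma>. a j)" by (rule sum.reindex_bij_betw[OF k])
    also have "\<dots> = (\<Sum>j\<in>{1..n}. a j)"
      using st a by (intro sum.mono_neutral_left) auto
    also have "\<dots> = d" using a by (simp add: monomials_deg_def)
    finally have s: "(\<Sum>i\<in>{1..n}. b i) = d" .
    have "{i. b i \<noteq> 0} = \<tau>"
    proof -
      have "\<forall>i\<in>\<tau>. k i \<in> \<sigma>" using k by (auto simp: bij_betw_def)
      then show ?thesis using a by (auto simp: b F_def split: if_splits)
    qed
    then show "b \<in> ?B" using z s by (simp add: monomials_deg_def)
  qed
  have "finite ?B" using finite_mon by simp
  then show ?thesis unfolding gcnt_def using card_inj_on_le[OF inj img] by simp
qed

lemma gcnt_inv:
  assumes st: "\<sigma> \<subseteq> {1..n}" "\<tau> \<subseteq> {1..n}" and c: "card \<sigma> = card \<tau>"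
  shows "gcnt n d \<sigma> = gcnt n d \<tau>"
proof -
  have f: "finite \<sigma>" "finite \<tau>" using st finite_subset by auto
  obtain h where h: "bij_betw h \<sigma> \<tau>" using finite_same_card_bij[OF f c] by blast
  have h': "bij_betw (the_inv_into \<sigma> h) \<tau> \<sigma>" using h by (rule bij_betw_the_inv_into)
  show ?thesis using gcnt_le[OF h' st, of d] gcnt_le[OF h st(2,1), of d] by (rule le_antisym)
qed

definition Gc :: "nat \<Rightarrow> nat \<Rightarrow> nat \<Rightarrow> nat" where
  "Gc n d k = gcnt n d {1..k}"

lemma gcnt_Gc: "\<sigma> \<subseteq> {1..n} \<Longrightarrow> gcnt n d \<sigma> = Gc n d (card \<sigma>)"
proof -
  assume s: "\<sigma> \<subseteq> {1..n}"
  then have "card \<sigma> \<le> n" using card_mono[of "{1..n}" \<sigma>] by simp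
  then show ?thesis unfolding Gc_def by (intro gcnt_inv[OF s]) auto
qed

lemma hf_sum:
  assumes sub: "\<forall>\<sigma>\<in>D. \<sigma> \<subseteq> {1..n}" and dc: "\<forall>\<sigma>\<in>D. \<forall>\<tau>. \<tau> \<subseteq> \<sigma> \<longrightarrow> \<tau> \<in> D"
  shows "SR_hilbert_fun n D d = (\<Sum>\<sigma>\<in>D. gcnt n d \<sigma>)"
proof -
  have fD: "finite D" using sub by (intro finite_subset[of D "Pow {1..n}"]) auto
  have eq: "{a \<in> monomials_deg n d. \<not> in_SR_ideal n D a} =
      (\<Union>\<sigma>\<in>D. {a \<in> monomials_deg n d. {i. a i \<noteq> 0} = \<sigma>})"
  proof (intro equalityI subsetI)
    fix a assume a: "a \<in> {a \<in> monomials_deg n d. \<not> in_SR_ideal n D a}"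
    have "{i. a i \<noteq> 0} \<subseteq> {1..n}" using a by (auto simp: monomials_deg_def)
    moreover have "\<forall>i\<in>{i. a i \<noteq> 0}. 1 \<le> a i" by auto
    ultimately have "{i. a i \<noteq> 0} \<in> D" using a unfolding in_SR_ideal_def by blast
    then show "a \<in> (\<Union>\<sigma>\<in>D. {a \<in> monomials_deg n d. {i. a i \<noteq> 0} = \<sigma>})" using a by auto
  next
    fix a assume "a \<in> (\<Union>\<sigma>\<in>D. {a \<in> monomials_deg n d. {i. a i \<noteq> 0} = \<sigma>})"
    then obtain \<sigma> where s: "\<sigma> \<in> D" and a: "a \<in> monomials_deg n d" "{i. a i \<noteq> 0} = \<sigma>" by auto
    have "\<not> in_SR_ideal n D a"
    proof
      assume "in_SR_ideal n D a"
      then obtain \<tau> where t: "\<tau> \<notin> D" "\<forall>i\<in>\<tau>. 1 \<le> a i" unfolding in_SR_ideal_def by auto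
      then have "\<tau> \<subseteq> \<sigma>" using a by auto
      then show False using dc s t by blast
    qed
    then show "a \<in> {a \<in> monomials_deg n d. \<not> in_SR_ideal n D a}" using a by auto
  qed
  show ?thesis unfolding SR_hilbert_fun_def eq gcnt_def
  proof (rule card_UN_disjoint)
    show "finite D" by (rule fD)
    show "\<forall>i\<in>D. finite {a \<in> monomials_deg n d. {i. a i \<noteq> 0} = i}"
      using finite_mon by simp
    show "\<forall>i\<in>D. \<forall>j\<in>D. i \<noteq> j \<longrightarrow> {a \<in> monomials_deg n d. {i. a i \<noteq> 0} = i} \<inter> {a \<in> monomials_deg n d. {ia. a ia \<noteq> 0} = j} = {}"
      by blast
  qed
qed

lemma hf_group:
  assumes sub: "\<forall>\<sigma>\<in>D. \<sigma> \<subseteq> {1..n}"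
  shows "(\<Sum>\<sigma>\<in>D. gcnt n d \<sigma>) = (\<Sum>k=0..n. faces_card D k * Gc n d k)"
proof -
  have fD: "finite D" using sub by (intro finite_subset[of D "Pow {1..n}"]) auto
  have im: "card ` D \<subseteq> {0..n}"
  proof
    fix x assume "x \<in> card ` D"
    then obtain \<sigma> where "\<sigma> \<in> D" "x = card \<sigma>" by auto
    then show "x \<in> {0..n}" using sub card_mono[of "{1..n}" \<sigma>] by auto
  qed
  have "(\<Sum>\<sigma>\<in>D. gcnt n d \<sigma>) = (\<Sum>k=0..n. \<Sum>\<sigma>\<in>{\<sigma>\<in>D. card \<sigma> = k}. gcnt n d \<sigma>)"
    by (rule sum.group[OF fD _ im, symmetric]) simp
  also have "\<dots> = (\<Sum>k=0..n. faces_card D k * Gc n d k)"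
  proof (rule sum.cong[OF refl])
    fix k
    have "(\<Sum>\<sigma>\<in>{\<sigma>\<in>D. card \<sigma> = k}. gcnt n d \<sigma>) = (\<Sum>\<sigma>\<in>{\<sigma>\<in>D. card \<sigma> = k}. Gc n d k)"
      using sub by (intro sum.cong) (auto simp: gcnt_Gc)
    then show "(\<Sum>\<sigma>\<in>{\<sigma>\<in>D. card \<sigma> = k}. gcnt n d \<sigma>) = faces_card D k * Gc n d k"
      by (simp add: faces_card_def)
  qed
  finally show ?thesis .
qed

lemma faces_skel: "faces_card (skel n l) k = (if k \<le> l then n choose k else 0)"
proof -
  have "{\<sigma>\<in>skel n l. card \<sigma> = k} = (if k \<le> l then {B. B \<subseteq> {1..n} \<and> card B = k} else {})"
    by (auto simp: skel_def)
  then show ?thesis by (simp add: faces_card_def n_subsets)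
qed

lemma hf_skel: "SR_hilbert_fun n (skel n l) d = (\<Sum>k=0..n. (if k \<le> l then n choose k else 0) * Gc n d k)"
proof -
  have s: "\<forall>\<sigma>\<in>skel n l. \<sigma> \<subseteq> {1..n}" by (auto simp: skel_def)
  have dc: "\<forall>\<sigma>\<in>skel n l. \<forall>\<tau>. \<tau> \<subseteq> \<sigma> \<longrightarrow> \<tau> \<in> skel n l"
  proof (intro ballI allI impI)
    fix \<sigma> \<tau> assume a: "\<sigma> \<in> skel n l" "\<tau> \<subseteq> \<sigma>"
    then have "finite \<sigma>" by (auto simp: skel_def intro: finite_subset)
    then show "\<tau> \<in> skel n l" using a card_mono[of \<sigma> \<tau>] by (auto simp: skel_def)
  qed
  show ?thesis using hf_sum[OF s dc] hf_group[OF s] by (simp add: faces_skel)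
qed

theorem proposition4p14:
  fixes n :: nat and \<Delta> :: "nat set set"
  assumes "simplicial_complex n \<Delta>"
  shows "SR_hilbert_series n \<Delta> =
    (\<Sum>l=0..n. fps_const
        (of_nat (faces_card \<Delta> l) / of_nat (n choose l)
         - (if l = n then 0 else of_nat (faces_card \<Delta> (l + 1)) / of_nat (n choose (l + 1))))
      * SR_hilbert_series n (skel n l))"
proof (rule fps_ext)
  fix d
  have s: "\<forall>\<sigma>\<in>\<Delta>. \<sigma> \<subseteq> {1..n}" and dc: "\<forall>\<sigma>\<in>\<Delta>. \<forall>\<tau>. \<tau> \<subseteq> \<sigma> \<longrightarrow> \<tau> \<in> \<Delta>"
    using assms by (auto simp: simplicial_complex_def)
  define f where "f k = (of_nat (faces_card \<Delta> k) :: rat)" for k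
  define C where "C k = (of_nat (n choose k) :: rat)" for k
  define G where "G k = (of_nat (Gc n d k) :: rat)" for k
  define \<beta> where "\<beta> k = (if k \<le> n then f k / C k else 0)" for k
  have alpha: "of_nat (faces_card \<Delta> l) / of_nat (n choose l)
         - (if l = n then 0 else of_nat (faces_card \<Delta> (l + 1)) / of_nat (n choose (l + 1)))
      = \<beta> l - \<beta> (Suc l)" if "l \<in> {0..n}" for l
    using that by (auto simp: \<beta>_def f_def C_def)
  have lhs: "fps_nth (SR_hilbert_series n \<Delta>) d = (\<Sum>k=0..n. f k * G k)"
    unfolding SR_hilbert_series_def using hf_sum[OF s dc] hf_group[OF s]
    by (simp add: f_def G_def)
  have "fps_nth (\<Sum>l=0..n. fps_const
        (of_nat (faces_card \<Delta> l) / of_nat (n choose l)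
         - (if l = n then 0 else of_nat (faces_card \<Delta> (l + 1)) / of_nat (n choose (l + 1))))
      * SR_hilbert_series n (skel n l)) d
     = (\<Sum>l=0..n. (\<beta> l - \<beta> (Suc l)) * (\<Sum>k=0..n. (if k \<le> l then C k else 0) * G k))"
    unfolding fps_sum_nth
    by (intro sum.cong refl) (simp add: alpha SR_hilbert_series_def hf_skel G_def, intro disjI2 sum.cong refl, simp add: C_def)
  also have "\<dots> = (\<Sum>l=0..n. \<Sum>k=0..n. (if k \<le> l then (\<beta> l - \<beta> (Suc l)) * (C k * G k) else 0))"
    by (simp add: sum_distrib_left, intro sum.cong refl, simp)
  also have "\<dots> = (\<Sum>k=0..n. \<Sum>l=0..n. (if k \<le> l then (\<beta> l - \<beta> (Suc l)) * (C k * G k) else 0))"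
    by (rule sum.swap)
  also have "\<dots> = (\<Sum>k=0..n. (\<Sum>l=k..n. (\<beta> l - \<beta> (Suc l))) * (C k * G k))"
  proof (rule sum.cong[OF refl])
    fix k assume k: "k \<in> {0..n}"
    have "(\<Sum>l=0..n. (if k \<le> l then (\<beta> l - \<beta> (Suc l)) * (C k * G k) else 0))
        = (\<Sum>l\<in>{l\<in>{0..n}. k \<le> l}. (\<beta> l - \<beta> (Suc l)) * (C k * G k))"
      by (rule sum.inter_filter[symmetric]) simp
    also have "{l\<in>{0..n}. k \<le> l} = {k..n}" by auto
    finally show "(\<Sum>l=0..n. (if k \<le> l then (\<beta> l - \<beta> (Suc l)) * (C k * G k) else 0))
        = (\<Sum>l=k..n. (\<beta> l - \<beta> (Suc l))) * (C k * G k)"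
      by (simp add: sum_distrib_right)
  qed
  also have "\<dots> = (\<Sum>k=0..n. f k * G k)"
  proof (rule sum.cong[OF refl])
    fix k assume k: "k \<in> {0..n}"
    have "(\<Sum>l=k..n. (\<beta> l - \<beta> (Suc l))) = - (\<Sum>l=k..n. (\<beta> (Suc l) - \<beta> l))"
      by (simp add: sum_negf[symmetric])
    also have "\<dots> = \<beta> k - \<beta> (Suc n)" using k by (subst sum_Suc_diff) auto
    also have "\<dots> = f k / C k" using k by (simp add: \<beta>_def)
    finally have "(\<Sum>l=k..n. (\<beta> l - \<beta> (Suc l))) = f k / C k" .
    moreover have "C k \<noteq> 0" using k by (simp add: C_def)
    ultimately show "(\<Sum>l=k..n. (\<beta> l - \<beta> (Suc l))) * (C k * G k) = f k * G k"
      by simp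
  qed
  finally show "fps_nth (SR_hilbert_series n \<Delta>) d = fps_nth (\<Sum>l=0..n. fps_const
        (of_nat (faces_card \<Delta> l) / of_nat (n choose l)
         - (if l = n then 0 else of_nat (faces_card \<Delta> (l + 1)) / of_nat (n choose (l + 1))))
      * SR_hilbert_series n (skel n l)) d" using lhs by simp
qed

end
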